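(* Let $A$ be a symmetric nonnegative $r$-matrix of order $n$ and let $p>1$. If $\lambda\in\mathbb{R}$ and $\mathbf{x}=(x_1,\ldots,x_n)\in\mathbb{S}^{n-1}_p$ satisfy \[ \lambda x_k|x_k|^{p-2}=\frac1r\frac{\partial P_A(\mathbf{x})}{\partial x_k},\qquad k=1,\ldots,n, \] then $|\lambda|\leq\eta^{(p)}(A)$.
   Context: A cubical $r$-matrix of order $n$ is a function $A$ on $[n]^r$ with entries $a_{i_1,\ldots,i_r}$; symmetric means invariant under permutations of indices. $P_A(\mathbf{x})=\sum_{i_1,\ldots,i_r}a_{i_1,\ldots,i_r}x_{i_1}\cdots x_{i_r}$. $\mathbb{S}^{n-1}_p=\{\mathbf{x}\in\mathbb{R}^n:\sum|x_i|^p=1\}$ and $\eta^{(p)}(A)=\max\{|P_A(\mathbf{x})|:\mathbf{x}\in\mathbb{S}^{n-1}_p\}$. The expression $x_k|x_k|^{p-2}$ is interpreted as $0$ when $x_k=0$. *)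

theory Defs
  imports "HOL-Analysis.Analysis"
begin

text \<open>Index tuples of [n]^r, with [n] rendered as {0..<n}, are lists of length r.
A cubical r-matrix of order n is a function on such lists (values elsewhere irrelevant).\<close>

definition idx :: "nat \<Rightarrow> nat \<Rightarrow> nat list set" where
  "idx r n = {is. length is = r \<and> set is \<subseteq> {..<n}}"

definition symmetric_rmatrix :: "nat \<Rightarrow> nat \<Rightarrow> (nat list \<Rightarrow> real) \<Rightarrow> bool" where
  "symmetric_rmatrix r n A \<longleftrightarrow>
     (\<forall>is\<in>idx r n. \<forall>js. mset js = mset is \<longrightarrow> A js = A is)"

definition nonneg_rmatrix :: "nat \<Rightarrow> nat \<Rightarrow> (nat list \<Rightarrow> real) \<Rightarrow> bool" where
  "nonneg_rmatrix r n A \<longleftrightarrow> (\<forall>is\<in>idx r n. A is \<ge> 0)"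

definition PA :: "nat \<Rightarrow> nat \<Rightarrow> (nat list \<Rightarrow> real) \<Rightarrow> (nat \<Rightarrow> real) \<Rightarrow> real" where
  "PA r n A x = (\<Sum>is\<in>idx r n. A is * prod_list (map x is))"

definition sphere_p :: "nat \<Rightarrow> real \<Rightarrow> (nat \<Rightarrow> real) set" where
  "sphere_p n p = {x. (\<Sum>i<n. \<bar>x i\<bar> powr p) = 1}"

definition eta :: "nat \<Rightarrow> nat \<Rightarrow> real \<Rightarrow> (nat list \<Rightarrow> real) \<Rightarrow> real" where
  "eta r n p A = (SUP x\<in>sphere_p n p. \<bar>PA r n A x\<bar>)"

definition partial :: "((nat \<Rightarrow> real) \<Rightarrow> real) \<Rightarrow> nat \<Rightarrow> (nat \<Rightarrow> real) \<Rightarrow> real" where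
  "partial F k x = deriv (\<lambda>t. F (x(k := t))) (x k)"

end

theory Submission
  imports Defs
begin

lemma prod_upd:
  fixes x :: "nat \<Rightarrow> real"
  shows "prod_list (map (x(k:=t)) js) = t ^ count (mset js) k * prod_list (map x (filter (\<lambda>j. j \<noteq> k) js))"
  proof (induction js)
  case (Cons a js)
  then show ?case by (cases "a = k") (simp_all add: mult.assoc mult.left_commute[of "x a"])
qed simp

lemma count_sum:
  fixes js :: "nat list"
  shows "set js \<subseteq> {..<n} \<Longrightarrow> (\<Sum>k<n. real (count (mset js) k)) = real (length js)"
proof (induction js)
  case Nil then show ?case by simp
next
  case (Cons a js)
  have d: "(\<Sum>k<n. (if a = k then 1 else 0)::real) = 1"
    using Cons.prems sum.delta'[OF finite_lessThan[of n], of a "\<lambda>_. (1::real)"] by simp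
  have "(\<Sum>k<n. real (count (mset (a#js)) k)) = (\<Sum>k<n. (if a = k then 1 else 0) + real (count (mset js) k))"
    by (intro sum.cong) auto
  also have "\<dots> = (\<Sum>k<n. (if a = k then 1 else 0)) + (\<Sum>k<n. real (count (mset js) k))"
    by (simp add: sum.distrib)
  also have "\<dots> = 1 + real (length js)" using Cons d by simp
  finally show ?case by simp
qed

lemma finite_idx: "finite (idx r n)"
proof -
  have "idx r n = {xs. set xs \<subseteq> {..<n} \<and> length xs = r}" unfolding idx_def by auto
  then show ?thesis using finite_lists_length_eq[of "{..<n}" r] by simp
qed

lemma euler_term:
  "x k * partial (PA r n A) k x =
     (\<Sum>js\<in>idx r n. A js * real (count (mset js) k) * prod_list (map x js))"
proof -
  define m where "m = (\<lambda>js. count (mset js) k)"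
  define c where "c = (\<lambda>js. prod_list (map x (filter (\<lambda>j. j \<noteq> k) js)))"
  have f: "(\<lambda>t. PA r n A (x(k := t))) = (\<lambda>t. \<Sum>js\<in>idx r n. A js * (c js * t ^ m js))"
    unfolding PA_def m_def c_def prod_upd by (simp add: mult.commute)
  have "((\<lambda>t. \<Sum>js\<in>idx r n. A js * (c js * t ^ m js)) has_field_derivative
        (\<Sum>js\<in>idx r n. A js * (c js * (real (m js) * x k ^ (m js - 1))))) (at (x k))"
    by (intro derivative_eq_intros) auto
  then have "partial (PA r n A) k x = (\<Sum>js\<in>idx r n. A js * (c js * (real (m js) * x k ^ (m js - 1))))"
    unfolding partial_def f by (rule DERIV_imp_deriv)
  then have "x k * partial (PA r n A) k x = (\<Sum>js\<in>idx r n. A js * real (m js) * (c js * x k ^ m js))"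
    by (simp add: sum_distrib_left, intro sum.cong) (auto simp: algebra_simps power_eq_if)
  also have "\<dots> = (\<Sum>js\<in>idx r n. A js * real (count (mset js) k) * prod_list (map x js))"
  proof (intro sum.cong refl)
    fix js
    have "prod_list (map x js) = prod_list (map (x(k := x k)) js)" by simp
    also have "\<dots> = x k ^ m js * c js" unfolding prod_upd m_def c_def by simp
    finally show "A js * real (m js) * (c js * x k ^ m js) = A js * real (count (mset js) k) * prod_list (map x js)"
      by (simp add: m_def mult.commute)
  qed
  finally show ?thesis .
qed

lemma euler:
  "(\<Sum>k<n. x k * partial (PA r n A) k x) = real r * PA r n A x"
proof -
  have "(\<Sum>k<n. x k * partial (PA r n A) k x) =
     (\<Sum>js\<in>idx r n. A js * prod_list (map x js) * (\<Sum>k<n. real (count (mset js) k)))"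
    by (simp add: euler_term sum.swap[of _ "{..<n}"] sum_distrib_left algebra_simps)
  also have "\<dots> = (\<Sum>js\<in>idx r n. A js * prod_list (map x js) * real r)"
    by (intro sum.cong refl) (auto simp: idx_def count_sum)
  finally show ?thesis by (simp add: PA_def sum_distrib_left algebra_simps)
qed

lemma bounded_PA: "bdd_above ((\<lambda>y. \<bar>PA r n A y\<bar>) ` sphere_p n p)" if "p > 0"
proof (rule bdd_aboveI2)
  fix y assume y: "y \<in> sphere_p n p"
  have yi: "\<bar>y i\<bar> \<le> 1" if "i < n" for i
  proof -
    have "\<bar>y i\<bar> powr p \<le> (\<Sum>j<n. \<bar>y j\<bar> powr p)"
      using that by (intro member_le_sum) auto
    then have "\<bar>y i\<bar> powr p \<le> 1" using y by (simp add: sphere_p_def)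
    then show ?thesis
      by (metis \<open>p > 0\<close> abs_ge_zero not_le powr_less_mono2 powr_one_eq_one zero_le_one)
  qed
  have pl: "\<bar>prod_list (map y js)\<bar> \<le> 1" if "set js \<subseteq> {..<n}" for js
    using that
  proof (induction js)
    case (Cons a js)
    then have "\<bar>y a\<bar> \<le> 1" "\<bar>prod_list (map y js)\<bar> \<le> 1" using yi by auto
    then show ?case by (simp add: abs_mult mult_le_one)
  qed simp
  have "\<bar>PA r n A y\<bar> \<le> (\<Sum>js\<in>idx r n. \<bar>A js * prod_list (map y js)\<bar>)"
    unfolding PA_def by (rule sum_abs)
  also have "\<dots> \<le> (\<Sum>js\<in>idx r n. \<bar>A js\<bar>)"
  proof (intro sum_mono)
    fix js assume "js \<in> idx r n"
    then have "\<bar>prod_list (map y js)\<bar> \<le> 1" using pl by (auto simp: idx_def)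
    then show "\<bar>A js * prod_list (map y js)\<bar> \<le> \<bar>A js\<bar>"
      by (simp add: abs_mult mult_left_le)
  qed
  finally show "\<bar>PA r n A y\<bar> \<le> (\<Sum>js\<in>idx r n. \<bar>A js\<bar>)" .
qed

theorem proposition9:
  fixes r n :: nat and A :: "nat list \<Rightarrow> real" and p lam :: real and x :: "nat \<Rightarrow> real"
  assumes "r \<ge> 1"
    and "symmetric_rmatrix r n A"
    and "nonneg_rmatrix r n A"
    and "p > 1"
    and "x \<in> sphere_p n p"
    and "\<forall>k<n. lam * (x k * \<bar>x k\<bar> powr (p - 2)) = (1 / real r) * partial (PA r n A) k x"
  shows "\<bar>lam\<bar> \<le> eta r n p A"
proof -
  have xk: "x k * (x k * \<bar>x k\<bar> powr (p - 2)) = \<bar>x k\<bar> powr p" for k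
  proof (cases "x k = 0")
    case True then show ?thesis using assms(4) by simp
  next
    case False
    have "\<bar>x k\<bar> powr p = \<bar>x k\<bar> powr 2 * \<bar>x k\<bar> powr (p - 2)"
      by (subst powr_add[symmetric]) simp
    also have "\<bar>x k\<bar> powr 2 = x k * x k" using False
      by (simp add: powr_numeral power2_eq_square)
    finally show ?thesis by (simp add: power2_eq_square)
  qed
  have "lam = lam * (\<Sum>k<n. \<bar>x k\<bar> powr p)" using assms(5) by (simp add: sphere_p_def)
  also have "\<dots> = (\<Sum>k<n. x k * (lam * (x k * \<bar>x k\<bar> powr (p - 2))))"
    by (simp add: sum_distrib_left xk[symmetric] algebra_simps)
  also have "\<dots> = (\<Sum>k<n. (1 / real r) * (x k * partial (PA r n A) k x))"
    using assms(6) by (intro sum.cong) auto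
  also have "\<dots> = PA r n A x"
    using assms(1) by (simp add: sum_divide_distrib[symmetric] euler)
  finally have "lam = PA r n A x" .
  then show ?thesis unfolding eta_def using assms(5) bounded_PA[of p r n A] assms(4)
    by (intro cSUP_upper2[where x=x]) auto
qed

end
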